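(* Let $\mathbb{A}=(a_{ij})\in\mathbb{R}^{n\times n}$ satisfy $a_{ij}\ge0$ for $i\ne j$ and $a_{jj}=-\sum_{i\ne j}a_{ij}$ for each $j$ (so every column sums to zero). Let $0<\alpha\le1$ and $t\ge0$. Then the matrix $$E_\alpha(\mathbb{A}t^\alpha)=\sum_{k=0}^\infty\frac{t^{\alpha k}\mathbb{A}^k}{\Gamma(\alpha k+1)}$$ is a (column) stochastic matrix: all its entries are nonnegative and each of its columns sums to $1$. *)

theory Defs
  imports "HOL-Analysis.Analysis"
begin

text \<open>Matrix power with respect to matrix multiplication (the operator ^ on vec is componentwise).\<close>
fun matpow :: "real ^ 'n ^ 'n \<Rightarrow> nat \<Rightarrow> real ^ 'n ^ 'n" where
  "matpow A 0 = mat 1"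
| "matpow A (Suc k) = A ** matpow A k"

text \<open>The k-th term  t^(alpha k) A^k / Gamma(alpha k + 1)  of the matrix Mittag-Leffler series
  E_alpha(A t^alpha); t^(alpha k) is written (t powr alpha)^k so that 0^0 = 1.\<close>
definition mittag_term :: "real \<Rightarrow> real ^ 'n ^ 'n \<Rightarrow> real \<Rightarrow> nat \<Rightarrow> real ^ 'n ^ 'n" where
  "mittag_term \<alpha> A t k = ((t powr \<alpha>) ^ k / Gamma (\<alpha> * real k + 1)) *\<^sub>R matpow A k"

definition mittag_leffler_mat :: "real \<Rightarrow> real ^ 'n ^ 'n \<Rightarrow> real \<Rightarrow> real ^ 'n ^ 'n" where
  "mittag_leffler_mat \<alpha> A t = (\<Sum>k. mittag_term \<alpha> A t k)"

end

theory Submission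
  imports Defs
begin


definition bc :: "real \<Rightarrow> nat \<Rightarrow> real" where
  "bc a n = pochhammer a n / fact n"

lemma bc_conv: "(\<Sum>i\<le>n. bc a i * bc b (n - i)) = bc (a + b) n"
proof -
  have "bc (a+b) n = (\<Sum>k\<le>n. of_nat (n choose k) * pochhammer a k * pochhammer b (n - k)) / fact n"
    by (simp add: bc_def pochhammer_binomial_sum)
  also have "\<dots> = (\<Sum>k\<le>n. of_nat (n choose k) * pochhammer a k * pochhammer b (n - k) / fact n)"
    by (simp add: sum_divide_distrib)
  also have "\<dots> = (\<Sum>i\<le>n. bc a i * bc b (n - i))"
  proof (rule sum.cong)
    fix k assume "k \<in> {..n}"
    then have k: "k \<le> n" by simp
    have "real (n choose k) = fact n / (fact k * fact (n - k))"
      using binomial_fact[OF k] by simp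
    then show "of_nat (n choose k) * pochhammer a k * pochhammer b (n - k) / fact n = bc a k * bc b (n - k)"
      by (simp add: bc_def field_simps)
  qed simp
  finally show ?thesis by simp
qed

lemma pochhammer_nonneg':
  fixes x :: real shows "0 \<le> x \<Longrightarrow> 0 \<le> pochhammer x n"
  by (induction n) (auto simp: pochhammer_Suc intro!: mult_nonneg_nonneg add_nonneg_nonneg)

lemma bc_0 [simp]: "bc a 0 = 1" by (simp add: bc_def)

lemma bc_Suc: "bc a (Suc n) = bc a n * ((a + real n) / real (Suc n))"
  by (simp add: bc_def pochhammer_Suc field_simps)

lemma bc_nonneg: "0 \<le> a \<Longrightarrow> 0 \<le> bc a n"
  unfolding bc_def by (rule divide_nonneg_pos[OF pochhammer_nonneg']) auto

lemma bc_neg_alpha: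
  assumes "0 < \<alpha>" "\<alpha> \<le> 1" "1 \<le> j" shows "bc (-\<alpha>) j \<le> 0"
proof -
  obtain m where j: "j = Suc m" using assms(3) by (cases j) auto
  have "pochhammer (-\<alpha>) j = (-\<alpha>) * pochhammer (-\<alpha> + 1) m"
    by (simp add: j pochhammer_rec)
  moreover have "0 \<le> pochhammer (-\<alpha> + 1) m" using assms by (intro pochhammer_nonneg') simp
  ultimately have "pochhammer (-\<alpha>) j \<le> 0" using assms by (simp add: mult_nonpos_nonneg)
  then show ?thesis unfolding bc_def by (intro divide_nonpos_pos) auto
qed

lemma bc_one_neg: "bc (-\<alpha>) 1 = -\<alpha>" by (simp add: bc_def)

lemma bc_mono:
  assumes "0 \<le> x" "m \<le> n" shows "bc (1 + x) m \<le> bc (1 + x) n"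
  using assms(2)
proof (induction n)
  case 0 then show ?case by simp
next
  case (Suc n)
  show ?case
  proof (cases "m = Suc n")
    case False
    then have "bc (1+x) m \<le> bc (1+x) n" using Suc by simp
    also have "\<dots> \<le> bc (1+x) (Suc n)"
    proof -
      have "1 \<le> (1 + x + real n) / real (Suc n)" using assms by (simp add: field_simps)
      then show ?thesis unfolding bc_Suc using assms bc_nonneg[of "1+x" n]
        by (metis mult_left_mono mult.right_neutral add_nonneg_nonneg zero_le_one)
    qed
    finally show ?thesis .
  qed simp
qed

lemma bc_le_pow: "0 \<le> x \<Longrightarrow> bc (1 + x) n \<le> (1 + x) ^ n"
proof (induction n)
  case (Suc n)
  have "bc (1+x) (Suc n) = bc (1+x) n * ((1 + x + real n) / real (Suc n))" by (simp add: bc_Suc)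
  also have "\<dots> \<le> (1+x)^n * (1 + x)"
    using Suc bc_nonneg[of "1+x" n]
    by (intro mult_mono) (auto simp: field_simps)
  finally show ?case by (simp add: mult.commute)
qed simp

lemma step_ineq:
  assumes "0 \<le> x" "1 \<le> N"
  shows "(1 + x + real N) / real (Suc N) \<le> ((real N + 1) / real N) powr x"
proof -
  have N: "real N > 0" using assms by simp
  have l: "1 / (real N + 1) \<le> ln ((real N + 1) / real N)"
  proof -
    have "ln (real N / (real N + 1)) \<le> real N / (real N + 1) - 1"
      using N by (intro ln_le_minus_one) simp
    moreover have "ln (real N / (real N + 1)) = - ln ((real N + 1) / real N)"
      using N by (simp add: ln_div)
    moreover have "real N / (real N + 1) - 1 = - (1 / (real N + 1))" using N by (simp add: field_simps)
    ultimately show ?thesis by linarith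
  qed
  have "(1 + x + real N) / real (Suc N) = 1 + x / (real N + 1)" using N by (simp add: field_simps)
  also have "\<dots> \<le> exp (x / (real N + 1))" using exp_ge_add_one_self[of "x / (real N + 1)"] by (simp add: add.commute)
  also have "\<dots> \<le> exp (x * ln ((real N + 1) / real N))"
    using l assms(1) by (simp add: mult_left_mono divide_inverse[symmetric]) (metis divide_inverse mult_left_mono mult.right_neutral mult_1_right times_divide_eq_right)
  also have "\<dots> = ((real N + 1) / real N) powr x" using N by (simp add: powr_def mult.commute)
  finally show ?thesis .
qed

lemma bc_bound:
  assumes "0 \<le> x" "1 \<le> N0" "N0 \<le> N"
  shows "bc (1 + x) N \<le> (1 + x) ^ N0 * (real N / real N0) powr x"
  using assms(3)
proof (induction N)
  case 0 then show ?case using assms by simp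
next
  case (Suc N)
  show ?case
  proof (cases "N0 = Suc N")
    case True
    then show ?thesis using bc_le_pow[OF assms(1), of N0] by simp
  next
    case False
    then have N: "N0 \<le> N" using Suc by simp
    then have N1: "1 \<le> N" using assms by simp
    have "bc (1+x) (Suc N) = bc (1+x) N * ((1 + x + real N) / real (Suc N))" by (simp add: bc_Suc)
    also have "\<dots> \<le> ((1 + x) ^ N0 * (real N / real N0) powr x) * (((real N + 1) / real N) powr x)"
      using Suc.IH[OF N] step_ineq[OF assms(1) N1] bc_nonneg[of "1+x" N] assms
      by (intro mult_mono) (auto simp: field_simps)
    also have "\<dots> = (1 + x) ^ N0 * (real (Suc N) / real N0) powr x"
    proof -
      have "(real N / real N0) * ((real N + 1) / real N) = real (Suc N) / real N0"
        using N1 assms by (simp add: field_simps)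
      then show ?thesis using N1 assms by (simp add: powr_mult[symmetric] add.commute)
    qed
    finally show ?thesis .
  qed
qed


lemma tri_swap:
  fixes f :: "nat \<Rightarrow> nat \<Rightarrow> 'a::comm_monoid_add"
  shows "(\<Sum>j\<le>n. \<Sum>k\<le>n-j. f j k) = (\<Sum>k\<le>n. \<Sum>j\<le>n-k. f j k)"
proof -
  have a: "(\<Sum>k\<le>n-j. f j k) = (\<Sum>k\<le>n. if j + k \<le> n then f j k else 0)" if "j \<le> n" for j
  proof -
    have "{..n} \<inter> {k. j + k \<le> n} = {..n-j}" using that by auto
    then show ?thesis by (simp add: sum.If_cases)
  qed
  have b: "(\<Sum>j\<le>n-k. f j k) = (\<Sum>j\<le>n. if j + k \<le> n then f j k else 0)" if "k \<le> n" for k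
  proof -
    have "{..n} \<inter> {j. j + k \<le> n} = {..n-k}" using that by auto
    then show ?thesis by (simp add: sum.If_cases)
  qed
  have "(\<Sum>j\<le>n. \<Sum>k\<le>n-j. f j k) = (\<Sum>j\<le>n. \<Sum>k\<le>n. if j + k \<le> n then f j k else 0)"
    by (rule sum.cong) (auto simp: a)
  also have "\<dots> = (\<Sum>k\<le>n. \<Sum>j\<le>n. if j + k \<le> n then f j k else 0)" by (rule sum.swap)
  also have "\<dots> = (\<Sum>k\<le>n. \<Sum>j\<le>n-k. f j k)"
    by (rule sum.cong) (auto simp: b)
  finally show ?thesis .
qed

lemma mul_sum_right:
  fixes A :: "real ^ 'n ^ 'n"
  shows "A ** (\<Sum>x\<in>S. f x) = (\<Sum>x\<in>S. A ** f x)"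
  by (simp add: matrix_matrix_mult_def vec_eq_iff sum_component sum_distrib_left)
     (simp add: sum.swap[where A=UNIV])

definition Yn :: "real \<Rightarrow> real \<Rightarrow> real ^ 'n ^ 'n \<Rightarrow> nat \<Rightarrow> real ^ 'n ^ 'n" where
  "Yn \<alpha> u A n = (\<Sum>k\<le>n. (u ^ k * bc (1 + \<alpha> * real k) (n - k)) *\<^sub>R matpow A k)"

lemma Yn_0: "Yn \<alpha> u A 0 = mat 1" by (simp add: Yn_def)

lemma Yn_rec:
  "(\<Sum>j\<le>Suc m. bc (-\<alpha>) j *\<^sub>R Yn \<alpha> u A (Suc m - j))
     = bc (1 - \<alpha>) (Suc m) *\<^sub>R mat 1 + u *\<^sub>R (A ** Yn \<alpha> u A m)"
proof -
  define n where "n = Suc m"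
  have "(\<Sum>j\<le>n. bc (-\<alpha>) j *\<^sub>R Yn \<alpha> u A (n - j))
      = (\<Sum>j\<le>n. \<Sum>k\<le>n-j. (bc (-\<alpha>) j * (u ^ k * bc (1 + \<alpha> * real k) (n - j - k))) *\<^sub>R matpow A k)"
    by (simp add: Yn_def scaleR_sum_right)
  also have "\<dots> = (\<Sum>k\<le>n. \<Sum>j\<le>n-k. (bc (-\<alpha>) j * (u ^ k * bc (1 + \<alpha> * real k) (n - j - k))) *\<^sub>R matpow A k)"
    by (rule tri_swap)
  also have "\<dots> = (\<Sum>k\<le>n. (u ^ k * bc (1 - \<alpha> + \<alpha> * real k) (n - k)) *\<^sub>R matpow A k)"
  proof (rule sum.cong)
    fix k assume "k \<in> {..n}"
    have "(\<Sum>j\<le>n-k. bc (-\<alpha>) j * (u ^ k * bc (1 + \<alpha> * real k) (n - j - k)))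
        = u ^ k * (\<Sum>j\<le>n-k. bc (-\<alpha>) j * bc (1 + \<alpha> * real k) ((n - k) - j))"
      by (simp add: sum_distrib_left mult_ac diff_commute add.commute)
    also have "\<dots> = u ^ k * bc (1 - \<alpha> + \<alpha> * real k) (n - k)"
    proof -
      have "(\<Sum>j\<le>n-k. bc (-\<alpha>) j * bc (1 + \<alpha> * real k) ((n - k) - j)) = bc (-\<alpha> + (1 + \<alpha> * real k)) (n-k)"
        by (rule bc_conv)
      then show ?thesis by (simp add: algebra_simps)
    qed
    finally show "(\<Sum>j\<le>n-k. (bc (-\<alpha>) j * (u ^ k * bc (1 + \<alpha> * real k) (n - j - k))) *\<^sub>R matpow A k)
        = (u ^ k * bc (1 - \<alpha> + \<alpha> * real k) (n - k)) *\<^sub>R matpow A k"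
      by (simp add: scaleR_sum_left[symmetric])
  qed simp
  also have "\<dots> = bc (1 - \<alpha>) n *\<^sub>R mat 1
      + (\<Sum>k\<le>m. (u ^ Suc k * bc (1 + \<alpha> * real k) (m - k)) *\<^sub>R matpow A (Suc k))"
    unfolding n_def
    by (subst sum.atMost_Suc_shift) (simp add: algebra_simps)
  also have "(\<Sum>k\<le>m. (u ^ Suc k * bc (1 + \<alpha> * real k) (m - k)) *\<^sub>R matpow A (Suc k))
      = u *\<^sub>R (A ** Yn \<alpha> u A m)"
    by (simp add: Yn_def mul_sum_right scaleR_sum_right matrix_scalar_ac scalar_matrix_assoc[symmetric] mult.assoc)
  finally show ?thesis by (simp add: n_def)
qed


definition nn :: "real ^ 'n ^ 'm \<Rightarrow> bool" where
  "nn M \<longleftrightarrow> (\<forall>i j. 0 \<le> M $ i $ j)"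

lemma nn_add: "nn A \<Longrightarrow> nn B \<Longrightarrow> nn (A + B)"
  by (simp add: nn_def)

lemma nn_scaleR: "0 \<le> c \<Longrightarrow> nn A \<Longrightarrow> nn (c *\<^sub>R A)"
  by (simp add: nn_def)

lemma nn_sum: "(\<And>x. x \<in> S \<Longrightarrow> nn (f x)) \<Longrightarrow> nn (\<Sum>x\<in>S. f x)"
  by (simp add: nn_def sum_component sum_nonneg)

lemma nn_mul: "nn A \<Longrightarrow> nn B \<Longrightarrow> nn (A ** B)"
  by (simp add: nn_def matrix_matrix_mult_def sum_nonneg)

lemma nn_mat1: "nn (mat 1 :: real ^ 'n ^ 'n)"
  by (simp add: nn_def mat_def)

lemma matrix_add_rdistrib': "((B::real^'n^'m) + C) ** D = B ** D + C ** D"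
  by (vector matrix_matrix_mult_def sum.distrib[symmetric] field_simps)

lemma Yn_nonneg:
  fixes A :: "real ^ 'n ^ 'n"
  assumes offdiag: "\<And>i j. i \<noteq> j \<Longrightarrow> A $ i $ j \<ge> 0"
    and diagb: "\<And>j. - A $ j $ j \<le> c"
    and u: "0 \<le> u" "u * c \<le> \<alpha>"
    and alpha: "0 < \<alpha>" "\<alpha> \<le> 1"
  shows "nn (Yn \<alpha> u A n)"
proof (induction n rule: less_induct)
  case (less n)
  show ?case
  proof (cases n)
    case 0 then show ?thesis by (simp add: Yn_0 nn_mat1)
  next
    case (Suc m)
    let ?Y = "Yn \<alpha> u A"
    have split: "{..Suc m} = insert 0 (insert 1 {2..Suc m})" by auto
    have "(\<Sum>j\<le>Suc m. bc (-\<alpha>) j *\<^sub>R ?Y (Suc m - j))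
        = ?Y (Suc m) + (- \<alpha>) *\<^sub>R ?Y m + (\<Sum>j\<in>{2..Suc m}. bc (-\<alpha>) j *\<^sub>R ?Y (Suc m - j))"
      using bc_one_neg[of \<alpha>] by (subst split) simp
    with Yn_rec[of \<alpha> u A m] have eq:
      "?Y (Suc m) = bc (1 - \<alpha>) (Suc m) *\<^sub>R mat 1 + (u *\<^sub>R (A ** ?Y m) + \<alpha> *\<^sub>R ?Y m)
         + (\<Sum>j\<in>{2..Suc m}. (- bc (-\<alpha>) j) *\<^sub>R ?Y (Suc m - j))"
      by (simp add: algebra_simps sum_negf)
    have M: "u *\<^sub>R (A ** ?Y m) + \<alpha> *\<^sub>R ?Y m = (u *\<^sub>R A + \<alpha> *\<^sub>R mat 1) ** ?Y m"
      by (simp add: matrix_add_rdistrib' scalar_matrix_assoc[symmetric])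
    have nnB: "nn (u *\<^sub>R A + \<alpha> *\<^sub>R mat 1)"
      unfolding nn_def
    proof (intro allI)
      fix i j
      show "0 \<le> (u *\<^sub>R A + \<alpha> *\<^sub>R mat 1) $ i $ j"
      proof (cases "i = j")
        case True
        have "- (u * A $ j $ j) \<le> u * c" using diagb[of j] u(1)
          by (metis minus_mult_right mult_left_mono)
        then show ?thesis using True u by (simp add: mat_def)
      next
        case False
        then show ?thesis using offdiag[OF False] u by (simp add: mat_def)
      qed
    qed
    have "nn (?Y (Suc m))"
      unfolding eq M
    proof (intro nn_add nn_scaleR nn_mat1 nn_mul[OF nnB] nn_sum)
      show "0 \<le> bc (1 - \<alpha>) (Suc m)" using alpha by (intro bc_nonneg) simp
      show "nn (?Y m)" using less Suc by simp
      fix j assume j: "j \<in> {2..Suc m}"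
      show "0 \<le> - bc (-\<alpha>) j" using bc_neg_alpha[OF alpha, of j] j by simp
      show "nn (?Y (Suc m - j))" using less Suc j by simp
    qed
    then show ?thesis using Suc by simp
  qed
qed


lemma summable_poly_geo:
  assumes r: "0 \<le> r" "r < 1" and a: "0 \<le> \<alpha>"
  shows "summable (\<lambda>k. (1 + \<alpha> * real k) ^ m * r ^ k)"
proof (cases "r = 0")
  case True
  have "summable (\<lambda>k. if k = 0 then 1 else 0 :: real)" by simp
  moreover have "(\<lambda>k. (1 + \<alpha> * real k) ^ m * r ^ k) = (\<lambda>k. if k = 0 then 1 else 0)"
    using True by (auto simp: fun_eq_iff)
  ultimately show ?thesis by simp
next
  case False
  then have rp: "0 < r" using r by simp
  define c where "c = (1 + r) / 2"
  have c: "r < c" "c < 1" using r unfolding c_def by auto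
  have "(\<lambda>k. (1 + 1 / real k) ^ m) \<longlonglongrightarrow> (1 + 0) ^ m"
    by (intro tendsto_intros)
  then have "(\<lambda>k. (1 + 1 / real k) ^ m) \<longlonglongrightarrow> 1" by simp
  moreover have "1 < c / r" using c rp by simp
  ultimately have "eventually (\<lambda>k. (1 + 1 / real k) ^ m < c / r) sequentially"
    by (rule order_tendstoD(2))
  then obtain N where N: "\<And>k. k \<ge> N \<Longrightarrow> (1 + 1 / real k) ^ m < c / r"
    unfolding eventually_sequentially by blast
  show ?thesis
  proof (rule summable_ratio_test[of c "Suc N"])
    show "c < 1" by fact
    fix k assume k: "Suc N \<le> k"
    then have k1: "1 \<le> real k" by simp
    have q: "1 + \<alpha> * real (Suc k) \<le> (1 + \<alpha> * real k) * (1 + 1 / real k)"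
    proof -
      have "\<alpha> \<le> (1 + \<alpha> * real k) / real k" using k1 a by (simp add: field_simps)
      then show ?thesis using k1 by (simp add: field_simps)
    qed
    have pos: "0 \<le> 1 + \<alpha> * real k" using a by simp
    have "(1 + \<alpha> * real (Suc k)) ^ m \<le> ((1 + \<alpha> * real k) * (1 + 1 / real k)) ^ m"
      using q a by (intro power_mono) auto
    also have "\<dots> = (1 + \<alpha> * real k) ^ m * (1 + 1 / real k) ^ m" by (simp add: power_mult_distrib)
    also have "\<dots> \<le> (1 + \<alpha> * real k) ^ m * (c / r)"
      using N[of k] k pos by (intro mult_left_mono) auto
    finally have "(1 + \<alpha> * real (Suc k)) ^ m * r ^ Suc k \<le> (1 + \<alpha> * real k) ^ m * (c / r) * r ^ Suc k"
      using r by (intro mult_right_mono) auto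
    also have "\<dots> = c * ((1 + \<alpha> * real k) ^ m * r ^ k)" using rp by (simp add: field_simps)
    finally show "norm ((1 + \<alpha> * real (Suc k)) ^ m * r ^ Suc k) \<le> c * norm ((1 + \<alpha> * real k) ^ m * r ^ k)"
      using pos r a by (simp add: abs_mult)
  qed
qed

lemma bc_lim1:
  assumes x: "0 \<le> x"
  shows "(\<lambda>M. bc (1 + x) M / (real M powr x)) \<longlonglongrightarrow> inverse (Gamma (1 + x))"
proof -
  have ev: "eventually (\<lambda>M. rGamma_series (1 + x) M * (real M / (1 + x + real M))
       = bc (1 + x) M / (real M powr x)) sequentially"
    using eventually_gt_at_top[of 0]
  proof eventually_elim
    case (elim M)
    then have M: "real M > 0" by simp
    have e: "exp ((1 + x) * ln (real M)) = real M * real M powr x"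
    proof -
      have "exp ((1 + x) * ln (real M)) = real M powr (1 + x)" using M by (simp add: powr_def mult.commute)
      also have "\<dots> = real M * real M powr x" using M by (simp add: powr_add)
      finally show ?thesis .
    qed
    have p: "pochhammer (1 + x) (M + 1) = pochhammer (1 + x) M * (1 + x + real M)"
      by (simp add: pochhammer_Suc)
    have "1 + x + real M > 0" using x M by simp
    moreover have "rGamma_series (1 + x) M = pochhammer (1 + x) M * (1 + x + real M) / (fact M * (real M * real M powr x))"
      unfolding rGamma_series_def of_real_eq_id id_apply e p by simp
    ultimately show ?case using M unfolding bc_def
      by (simp add: field_simps)
  qed
  have "(\<lambda>M. rGamma_series (1 + x) M * (real M / (1 + x + real M))) \<longlonglongrightarrow> rGamma (1 + x) * 1"
  proof (intro tendsto_mult rGamma_series_LIMSEQ)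
    have "(\<lambda>M. 1 / (1 + (1 + x) * (1 / real M))) \<longlonglongrightarrow> 1 / (1 + (1 + x) * 0)"
      by (intro tendsto_intros) auto
    moreover have "eventually (\<lambda>M. 1 / (1 + (1 + x) * (1 / real M)) = real M / (1 + x + real M)) sequentially"
      using eventually_gt_at_top[of 0] by eventually_elim (use x in \<open>simp add: field_simps\<close>)
    ultimately show "(\<lambda>M. real M / (1 + x + real M)) \<longlonglongrightarrow> 1"
      by (simp add: tendsto_cong)
  qed
  then show ?thesis using ev by (simp add: tendsto_cong rGamma_inverse_Gamma)
qed

lemma bc_lim2:
  assumes x: "0 \<le> x"
  shows "(\<lambda>N. bc (1 + x) (N - k) / (real N powr x)) \<longlonglongrightarrow> inverse (Gamma (1 + x))"
proof -
  have a: "(\<lambda>N. bc (1 + x) (N - k) / (real (N - k) powr x)) \<longlonglongrightarrow> inverse (Gamma (1 + x))"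
    by (rule filterlim_compose[OF bc_lim1[OF x] filterlim_minus_const_nat_at_top])
  have "(\<lambda>N. (1 - real k * (1 / real N)) powr x) \<longlonglongrightarrow> (1 - real k * 0) powr x"
    by (intro tendsto_intros) auto
  then have b: "(\<lambda>N. (1 - real k * (1 / real N)) powr x) \<longlonglongrightarrow> 1" by simp
  have "(\<lambda>N. bc (1 + x) (N - k) / (real (N - k) powr x) * (1 - real k * (1 / real N)) powr x)
      \<longlonglongrightarrow> inverse (Gamma (1 + x)) * 1"
    by (intro tendsto_mult a b)
  moreover have "eventually (\<lambda>N. bc (1 + x) (N - k) / (real (N - k) powr x) * (1 - real k * (1 / real N)) powr x
      = bc (1 + x) (N - k) / (real N powr x)) sequentially"
    using eventually_gt_at_top[of k]
  proof eventually_elim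
    case (elim N)
    then have N: "real N > 0" "real (N - k) > 0" by auto
    have "1 - real k * (1 / real N) = real (N - k) / real N" using elim N by (simp add: field_simps of_nat_diff)
    then show ?case using N by (simp add: powr_divide)
  qed
  ultimately show ?thesis by (simp add: tendsto_cong)
qed


lemma entry_bound:
  fixes A :: "real ^ 'n ^ 'n"
  shows "\<bar>matpow A k $ i $ j\<bar> \<le> (\<Sum>i\<in>UNIV. \<Sum>j\<in>UNIV. \<bar>A $ i $ j\<bar>) ^ k"
proof (induction k arbitrary: i j)
  case 0 then show ?case by (simp add: mat_def)
next
  case (Suc k)
  define S where "S = (\<Sum>i\<in>UNIV. \<Sum>j\<in>UNIV. \<bar>A $ i $ j\<bar>)"
  have S0: "0 \<le> S" unfolding S_def by (intro sum_nonneg) auto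
  have "\<bar>matpow A (Suc k) $ i $ j\<bar> = \<bar>\<Sum>l\<in>UNIV. A $ i $ l * matpow A k $ l $ j\<bar>"
    by (simp add: matrix_matrix_mult_def)
  also have "\<dots> \<le> (\<Sum>l\<in>UNIV. \<bar>A $ i $ l\<bar> * \<bar>matpow A k $ l $ j\<bar>)"
    by (rule order_trans[OF sum_abs]) (simp add: abs_mult)
  also have "\<dots> \<le> (\<Sum>l\<in>UNIV. \<bar>A $ i $ l\<bar> * S ^ k)"
    using Suc by (intro sum_mono mult_left_mono) (auto simp: S_def)
  also have "\<dots> = (\<Sum>l\<in>UNIV. \<bar>A $ i $ l\<bar>) * S ^ k" by (simp add: sum_distrib_right)
  also have "\<dots> \<le> S * S ^ k"
  proof (rule mult_right_mono)
    show "(\<Sum>l\<in>UNIV. \<bar>A $ i $ l\<bar>) \<le> S" unfolding S_def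
      by (rule member_le_sum[of i UNIV "\<lambda>i. \<Sum>j\<in>UNIV. \<bar>A $ i $ j\<bar>"]) (auto intro: sum_nonneg)
  qed (use S0 in simp)
  finally show ?case by (simp add: S_def)
qed

lemma colsum_matpow:
  fixes A :: "real ^ 'n ^ 'n"
  assumes "\<And>j. (\<Sum>i\<in>UNIV. A $ i $ j) = 0"
  shows "(\<Sum>i\<in>UNIV. matpow A (Suc k) $ i $ j) = 0"
proof -
  have "(\<Sum>i\<in>UNIV. matpow A (Suc k) $ i $ j) = (\<Sum>i\<in>UNIV. \<Sum>l\<in>UNIV. A $ i $ l * matpow A k $ l $ j)"
    by (simp add: matrix_matrix_mult_def)
  also have "\<dots> = (\<Sum>l\<in>UNIV. (\<Sum>i\<in>UNIV. A $ i $ l) * matpow A k $ l $ j)"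
    by (subst sum.swap) (simp add: sum_distrib_right)
  also have "\<dots> = 0" using assms by simp
  finally show ?thesis .
qed


lemma entry_main:
  fixes A :: "real ^ 'n ^ 'n" and \<alpha> t :: real
  assumes offdiag: "\<And>i j. i \<noteq> j \<Longrightarrow> A $ i $ j \<ge> 0"
    and alpha: "0 < \<alpha>" "\<alpha> \<le> 1"
    and t: "t \<ge> 0"
  shows "summable (\<lambda>k. \<bar>mittag_term \<alpha> A t k $ i $ j\<bar>)
       \<and> 0 \<le> (\<Sum>k. mittag_term \<alpha> A t k $ i $ j)"
proof -
  define S where "S = (\<Sum>i\<in>UNIV. \<Sum>j\<in>UNIV. \<bar>A $ i $ j\<bar>)"
  have S0: "0 \<le> S" unfolding S_def by (intro sum_nonneg) auto
  have diagb: "- A $ l $ l \<le> S" for l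
  proof -
    have "\<bar>A $ l $ l\<bar> \<le> (\<Sum>j\<in>UNIV. \<bar>A $ l $ j\<bar>)"
      by (rule member_le_sum) auto
    also have "\<dots> \<le> S" unfolding S_def
      by (rule member_le_sum[of l UNIV "\<lambda>i. \<Sum>j\<in>UNIV. \<bar>A $ i $ j\<bar>"]) (auto intro: sum_nonneg)
    finally show ?thesis by linarith
  qed
  define T where "T = t powr \<alpha>"
  have T0: "0 \<le> T" unfolding T_def by simp
  define K where "K = T * S * (2 + 1 / \<alpha>) + 1"
  have K1: "1 \<le> K" unfolding K_def using T0 S0 alpha by simp
  define N0 where "N0 = nat \<lceil>K powr (1 / \<alpha>)\<rceil> + 1"
  have N01: "1 \<le> N0" unfolding N0_def by simp
  have N0K: "K \<le> real N0 powr \<alpha>"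
  proof -
    have "K powr (1 / \<alpha>) \<le> real N0" unfolding N0_def by linarith
    then have "(K powr (1 / \<alpha>)) powr \<alpha> \<le> real N0 powr \<alpha>"
      using alpha K1 by (intro powr_mono2) auto
    also have "(K powr (1 / \<alpha>)) powr \<alpha> = K" using alpha K1 by (simp add: powr_powr)
    finally show ?thesis .
  qed
  have N0pos: "0 < real N0 powr \<alpha>" using N01 by simp
  define r where "r = T * S / real N0 powr \<alpha>"
  have r0: "0 \<le> r" unfolding r_def using T0 S0 N0pos by simp
  have rK: "r \<le> T * S / K" unfolding r_def using T0 S0 K1 N0K N0pos
    by (intro divide_left_mono) (auto intro!: mult_pos_pos)
  have r2: "r \<le> 1 / 2"
  proof -
    have h: "0 \<le> S * T / \<alpha>" using T0 S0 alpha by simp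
    have "T * S * (2 + 1 / \<alpha>) = 2 * (T * S) + S * T / \<alpha>" by (simp add: algebra_simps)
    then have "2 * (T * S) \<le> K" using h unfolding K_def by linarith
    then have "T * S / K \<le> 1 / 2" using K1 by (simp add: pos_divide_le_eq)
    then show ?thesis using rK by linarith
  qed
  have ra: "r \<le> \<alpha>"
  proof -
    have "\<alpha> * K = 2 * \<alpha> * (T * S) + T * S + \<alpha>" unfolding K_def using alpha by (simp add: algebra_simps)
    moreover have "0 \<le> 2 * \<alpha> * (T * S)" using alpha T0 S0 by simp
    ultimately have "T * S \<le> \<alpha> * K" using alpha by linarith
    then have "T * S / K \<le> \<alpha>" using K1 by (simp add: pos_divide_le_eq mult.commute)
    then show ?thesis using rK by simp
  qed
  define D where "D k = (1 + \<alpha> * real k) ^ N0 * r ^ k" for k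
  have sumD: "summable D" unfolding D_def
    by (rule summable_poly_geo) (use r0 r2 alpha in auto)
  define a where "a k N = (if k \<le> N then T ^ k * (bc (1 + \<alpha> * real k) (N - k) / real N powr (\<alpha> * real k)) * matpow A k $ i $ j else 0)" for k N
  define b where "b k = mittag_term \<alpha> A t k $ i $ j" for k
  have b_eq: "b k = T ^ k * inverse (Gamma (1 + \<alpha> * real k)) * matpow A k $ i $ j" for k
    by (simp add: b_def mittag_term_def T_def add.commute divide_inverse)
  have lim: "(\<lambda>N. a k N) \<longlonglongrightarrow> b k" for k
  proof -
    have "(\<lambda>N. T ^ k * (bc (1 + \<alpha> * real k) (N - k) / real N powr (\<alpha> * real k)) * matpow A k $ i $ j)
        \<longlonglongrightarrow> T ^ k * inverse (Gamma (1 + \<alpha> * real k)) * matpow A k $ i $ j"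
      using alpha by (intro tendsto_mult tendsto_const bc_lim2) auto
    moreover have "eventually (\<lambda>N. T ^ k * (bc (1 + \<alpha> * real k) (N - k) / real N powr (\<alpha> * real k)) * matpow A k $ i $ j = a k N) sequentially"
      using eventually_ge_at_top[of k] by eventually_elim (simp add: a_def)
    ultimately show ?thesis unfolding b_eq by (simp add: tendsto_cong)
  qed
  have bnd: "norm (a k N) \<le> D k" if N: "N0 \<le> N" for k N
  proof (cases "k \<le> N")
    case False
    have "0 \<le> D k" unfolding D_def using alpha r0 by simp
    then show ?thesis using False by (simp add: a_def)
  next
    case True
    define x where "x = \<alpha> * real k"
    have x0: "0 \<le> x" unfolding x_def using alpha by simp
    have Npos: "0 < real N" using N N01 by simp
    have "bc (1 + x) (N - k) \<le> bc (1 + x) N" by (rule bc_mono) (use x0 in auto)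
    also have "\<dots> \<le> (1 + x) ^ N0 * (real N / real N0) powr x" by (rule bc_bound[OF x0 N01 N])
    finally have "bc (1 + x) (N - k) / real N powr x \<le> (1 + x) ^ N0 * (real N / real N0) powr x / real N powr x"
      using Npos by (intro divide_right_mono) auto
    also have "\<dots> = (1 + x) ^ N0 / real N0 powr x"
      using Npos N01 by (simp add: powr_divide)
    finally have q: "bc (1 + x) (N - k) / real N powr x \<le> (1 + x) ^ N0 / real N0 powr x" .
    have q0: "0 \<le> bc (1 + x) (N - k) / real N powr x" using x0 by (intro divide_nonneg_nonneg bc_nonneg) auto
    have "norm (a k N) = T ^ k * (bc (1 + x) (N - k) / real N powr x) * \<bar>matpow A k $ i $ j\<bar>"
      using True T0 q0 bc_nonneg[of "1 + x" "N - k"] x0 by (simp add: a_def x_def abs_mult)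
    also have "\<dots> \<le> T ^ k * ((1 + x) ^ N0 / real N0 powr x) * S ^ k"
      using q q0 T0 entry_bound[of A k i j] x0
      by (intro mult_mono mult_left_mono) (auto simp: S_def)
    also have "\<dots> = D k"
    proof -
      have "real N0 powr x = (real N0 powr \<alpha>) ^ k" unfolding x_def using N01
        by (simp add: powr_power mult.commute)
      then show ?thesis unfolding D_def r_def x_def using N0pos
        by (simp add: power_divide power_mult_distrib field_simps)
    qed
    finally show ?thesis .
  qed
  have ev: "eventually (\<lambda>(k, N). norm (a k N) \<le> D k) (at_top \<times>\<^sub>F sequentially)"
    unfolding eventually_prod_filter
    by (rule exI[of _ "\<lambda>_. True"], rule exI[of _ "\<lambda>N. N0 \<le> N"]) (use bnd in auto)
  from tannerys_theorem[of a b sequentially D, OF lim ev sumD]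
  have tan: "summable (\<lambda>n. norm (b n))" "(\<lambda>N. \<Sum>k. a k N) \<longlonglongrightarrow> suminf b" by auto
  have Yeq: "(\<Sum>k. a k N) = Yn \<alpha> ((t / real N) powr \<alpha>) A N $ i $ j" if N: "N0 \<le> N" for N
  proof -
    have Npos: "0 < real N" using N N01 by simp
    have "(\<Sum>k. a k N) = (\<Sum>k\<le>N. a k N)" by (rule suminf_finite) (auto simp: a_def)
    also have "\<dots> = Yn \<alpha> ((t / real N) powr \<alpha>) A N $ i $ j"
      unfolding Yn_def sum_component
    proof (rule sum.cong)
      fix k assume "k \<in> {..N}"
      have "((t / real N) powr \<alpha>) ^ k = T ^ k / real N powr (\<alpha> * real k)"
        unfolding T_def using Npos t by (simp add: powr_divide power_divide powr_power mult.commute)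
      then show "a k N = ((((t / real N) powr \<alpha>) ^ k * bc (1 + \<alpha> * real k) (N - k)) *\<^sub>R matpow A k) $ i $ j"
        using \<open>k \<in> {..N}\<close> by (simp add: a_def)
    qed simp
    finally show ?thesis .
  qed
  have evnn: "eventually (\<lambda>N. 0 \<le> (\<Sum>k. a k N)) sequentially"
    using eventually_ge_at_top[of N0]
  proof eventually_elim
    case (elim N)
    have Npos: "0 < real N" using elim N01 by simp
    define u where "u = (t / real N) powr \<alpha>"
    have u0: "0 \<le> u" unfolding u_def by simp
    have "real N0 powr \<alpha> \<le> real N powr \<alpha>" using elim alpha by (intro powr_mono2) auto
    then have "u * S \<le> r" unfolding u_def r_def T_def using Npos t S0 N0pos T0
      by (simp add: powr_divide divide_simps mult_left_mono mult.commute mult.left_commute)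
    then have "u * S \<le> \<alpha>" using ra by simp
    then have "nn (Yn \<alpha> u A N)" by (intro Yn_nonneg[OF offdiag diagb u0 _ alpha])
    then show ?case using Yeq[OF elim] by (simp add: nn_def u_def)
  qed
  have "0 \<le> suminf b" by (rule tendsto_lowerbound[OF tan(2) evnn]) simp
  moreover have "suminf b = (\<Sum>k. mittag_term \<alpha> A t k $ i $ j)" unfolding b_def ..
  ultimately show ?thesis using tan(1) by (simp add: b_def)
qed


theorem mainTheorem6:
  fixes A :: "real ^ 'n ^ 'n" and \<alpha> t :: real
  assumes offdiag: "\<And>i j. i \<noteq> j \<Longrightarrow> A $ i $ j \<ge> 0"
    and diag: "\<And>j. A $ j $ j = - (\<Sum>i\<in>UNIV - {j}. A $ i $ j)"
    and alpha: "0 < \<alpha>" "\<alpha> \<le> 1"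
    and t: "t \<ge> 0"
  shows "summable (mittag_term \<alpha> A t)
    \<and> (\<forall>i j. mittag_leffler_mat \<alpha> A t $ i $ j \<ge> 0)
    \<and> (\<forall>j. (\<Sum>i\<in>UNIV. mittag_leffler_mat \<alpha> A t $ i $ j) = 1)"
proof -
  let ?f = "mittag_term \<alpha> A t"
  have E: "summable (\<lambda>k. \<bar>?f k $ i $ j\<bar>)" "0 \<le> (\<Sum>k. ?f k $ i $ j)" for i j
    using entry_main[OF offdiag alpha t, of i j] by auto
  have summ: "summable ?f"
  proof (rule summable_comparison_test')
    show "summable (\<lambda>k. \<Sum>i\<in>UNIV. \<Sum>j\<in>UNIV. \<bar>?f k $ i $ j\<bar>)"
      by (intro summable_sum E)
    fix k :: nat
    have "norm (?f k) \<le> (\<Sum>i\<in>UNIV. norm (?f k $ i))" by (simp add: norm_vec_def L2_set_le_sum)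
    also have "\<dots> \<le> (\<Sum>i\<in>UNIV. \<Sum>j\<in>UNIV. \<bar>?f k $ i $ j\<bar>)"
      by (intro sum_mono norm_le_l1_cart)
    finally show "norm (?f k) \<le> (\<Sum>i\<in>UNIV. \<Sum>j\<in>UNIV. \<bar>?f k $ i $ j\<bar>)" .
  qed
  have bl: "bounded_linear (\<lambda>M::real^'n^'n. M $ i $ j)" for i j
  proof -
    have "bounded_linear ((\<lambda>v::real^'n. v $ j) \<circ> (\<lambda>M::real^'n^'n. M $ i))"
      unfolding o_def by (rule bounded_linear_compose[OF bounded_linear_vec_nth bounded_linear_vec_nth, unfolded o_def])
    then show ?thesis by (simp add: o_def)
  qed
  have comp: "mittag_leffler_mat \<alpha> A t $ i $ j = (\<Sum>k. ?f k $ i $ j)" for i j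
    unfolding mittag_leffler_mat_def using bounded_linear.suminf[OF bl summ] by simp
  have sij: "summable (\<lambda>k. ?f k $ i $ j)" for i j
    using bounded_linear.summable[OF bl summ] by simp
  have colA: "(\<Sum>i\<in>UNIV. A $ i $ j) = 0" for j
  proof -
    have "(\<Sum>i\<in>UNIV. A $ i $ j) = A $ j $ j + (\<Sum>i\<in>UNIV - {j}. A $ i $ j)"
      by (simp add: sum.remove)
    then show ?thesis using diag[of j] by simp
  qed
  have col: "(\<Sum>i\<in>UNIV. mittag_leffler_mat \<alpha> A t $ i $ j) = 1" for j
  proof -
    have "(\<Sum>i\<in>UNIV. mittag_leffler_mat \<alpha> A t $ i $ j) = (\<Sum>i\<in>UNIV. \<Sum>k. ?f k $ i $ j)"
      by (simp add: comp)
    also have "\<dots> = (\<Sum>k. \<Sum>i\<in>UNIV. ?f k $ i $ j)"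
      by (rule suminf_sum[symmetric]) (use sij in auto)
    also have "\<dots> = (\<Sum>k. if k = 0 then 1 else 0)"
    proof (rule arg_cong[where f = suminf], rule ext)
      fix k
      show "(\<Sum>i\<in>UNIV. ?f k $ i $ j) = (if k = 0 then 1 else 0)"
      proof (cases k)
        case 0 then show ?thesis by (simp add: mittag_term_def mat_def)
      next
        case (Suc m)
        have "(\<Sum>i\<in>UNIV. ?f k $ i $ j) = ((t powr \<alpha>) ^ k / Gamma (\<alpha> * real k + 1)) * (\<Sum>i\<in>UNIV. matpow A (Suc m) $ i $ j)"
          by (simp add: mittag_term_def sum_distrib_left Suc del: matpow.simps)
        also have "\<dots> = 0" using colsum_matpow[OF colA] by simp
        finally show ?thesis using Suc by simp
      qed
    qed
    also have "\<dots> = 1" by (subst suminf_finite[of "{0}"]) auto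
    finally show ?thesis .
  qed
  show ?thesis using summ E(2) col by (simp add: comp)
qed

end
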